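(* Let $(X_1,T_1,\delta_1,\xi_1,\xi_1\nu_1),\ldots,(X_n,T_n,\delta_n,\xi_n,\xi_n\nu_n)$ be observations from the mixture cure model with partially known cure status described in the context, with distinct observed times, let $K_h(\cdot)=K(\cdot/h)/h$ for a kernel $K$ and bandwidth $h>0$, let $B_{hi}(x)=K_h(x-X_i)/\sum_{j=1}^n K_h(x-X_j)$ be the Nadaraya–Watson weights, let $T_{(1)}<\cdots<T_{(n)}$ be the ordered observed times and let $X_{[i]},\delta_{[i]},\xi_{[i]},\nu_{[i]},B_{h[i]}(x)$ denote the quantities attached to the observation with time $T_{(i)}$. Define $$\widehat S_h^c(t\mid x)=\prod_{i=1}^{n}\left\{1-\frac{\delta_{[i]}B_{h[i]}(x)\mathbf 1(T_{(i)}\le t)}{\sum_{j=i}^{n}B_{h[j]}(x)+\sum_{j=1}^{i-1}B_{h[j]}(x)\mathbf 1(\xi_{[j]}\nu_{[j]}=1)}\right\}$$ and Beran's estimator $$\widehat S_h(t\mid x)=\prod_{i=1}^{n}\left\{1-\frac{\delta_{[i]}B_{h[i]}(x)\mathbf 1(T_{(i)}\le t)}{\sum_{j=i}^{n}B_{h[j]}(x)}\right\}$$ (all denominators assumed nonzero). Then: 1. If $\xi_i\nu_i=0$ for all $i=1,\ldots,n$, then $\widehat S_h^c(t\mid x)=\widehat S_h(t\mid x)$ for all $t$. 2. If there is a fixed known cure threshold $d$ such that, for every $i$, $\xi_i\nu_i=1$ if and only if $T_i\ge d$, then $\widehat S_h^c(t\mid x)=\widehat S_h(t\mid x)$ for all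 $t$. 3. If there is no censoring, i.e. the sample consists of $n_1$ uncured individuals with $\delta_i=1$, $\xi_i\nu_i=0$, $T_i=Y_i<\infty$, and $m=n-n_1$ cured individuals with $Y_i=\infty$, known cure status $\xi_i\nu_i=1$, $\delta_i=0$ and observed times larger than all those of the uncured individuals, then for all finite $t$ below these cured times, $\widehat S_h^c(t\mid x)=\sum_{i=1}^{n}B_{h[i]}(x)\mathbf 1(T_{(i)}>t)$. 4. In the unconditional setting, i.e. with all weights equal to $1/n$, the estimator becomes $\widehat S_n^c(t)=\prod_{i=1}^{n}\left\{1-\frac{\delta_{[i]}\mathbf 1(T_{(i)}\le t)}{n-i+1+\sum_{j=1}^{i-1}\mathbf 1(\xi_{[j]}\nu_{[j]}=1)}\right\}$; and if moreover there is a fixed known $d$ such that an individual is known to be cured if and only if its observed time is at least $d$, then $\widehat S_n^c(t)=\prod_{i=1}^{n}\left\{1-\frac{\delta_{[i]}\mathbf 1(T_{(i)}\le t)}{n-i+1}\right\}$ (the generalized maximum likelihood estimator of Laska and Meisner).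
   Context: Mixture cure model: $Y\in(0,\infty]$ is the survival time, with $Y=\infty$ meaning the subject is cured; $\nu=\mathbf 1(Y=\infty)$ is the cure indicator; $C$ is a censoring time; $X$ is a real covariate. One observes $T=\min(Y,C)$, $\delta=\mathbf 1(Y\le C)$, an indicator $\xi$ of whether the cure status is known ($\xi=1$ known), and $\xi\nu$. Observed individuals fall into three groups: uncured with observed event ($\delta=1,\xi=1,\xi\nu=0$), censored with unknown cure status ($\delta=0,\xi=0,\xi\nu=0$), censored and known to be cured ($\delta=0,\xi=1,\xi\nu=1$). *)

theory Defs
  imports "HOL-Analysis.Analysis" "HOL-Library.Extended_Real"
begin

text \<open>Y: survival time in (0, infinity] (infinity = cured), C: censoring time,
  T = min(Y, C) observed time, delta = 1(Y <= C), nu = 1(Y = infinity),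
  xi = cure status known. The observed triple (delta, xi, xi nu) falls into one of
  the three groups of the model.\<close>
definition cure_obs :: "ereal \<Rightarrow> real \<Rightarrow> real \<Rightarrow> bool \<Rightarrow> bool \<Rightarrow> bool \<Rightarrow> bool" where
  "cure_obs Y C T \<delta> \<xi> \<nu> \<longleftrightarrow>
     Y > 0 \<and> ereal T = min Y (ereal C) \<and> (\<delta> \<longleftrightarrow> Y \<le> ereal C) \<and> (\<nu> \<longleftrightarrow> Y = \<infinity>) \<and>
     ((\<delta> \<and> \<xi> \<and> \<not> (\<xi> \<and> \<nu>)) \<or> (\<not> \<delta> \<and> \<not> \<xi> \<and> \<not> (\<xi> \<and> \<nu>)) \<or> (\<not> \<delta> \<and> \<xi> \<and> (\<xi> \<and> \<nu>)))"

definition Kh :: "(real \<Rightarrow> real) \<Rightarrow> real \<Rightarrow> real \<Rightarrow> real" where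
  "Kh K h u = K (u / h) / h"

definition NW_weight :: "(real \<Rightarrow> real) \<Rightarrow> real \<Rightarrow> nat \<Rightarrow> (nat \<Rightarrow> real) \<Rightarrow> real \<Rightarrow> nat \<Rightarrow> real" where
  "NW_weight K h n X x i = Kh K h (x - X i) / (\<Sum>j=1..n. Kh K h (x - X j))"

text \<open>Generic product-limit estimator with partially known cure status, for weights w
  attached to observations 1..n; sigma is the sorting permutation, i.e. observation
  sigma i has the i-th smallest time T_(i). So w (sigma i) = B_{h[i]}(x) etc.\<close>
definition Sc_w :: "nat \<Rightarrow> (nat \<Rightarrow> real) \<Rightarrow> (nat \<Rightarrow> real) \<Rightarrow> (nat \<Rightarrow> bool) \<Rightarrow> (nat \<Rightarrow> bool)
    \<Rightarrow> (nat \<Rightarrow> bool) \<Rightarrow> (nat \<Rightarrow> nat) \<Rightarrow> real \<Rightarrow> real" where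
  "Sc_w n w T \<delta> \<xi> \<nu> \<sigma> t =
     (\<Prod>i=1..n. 1 - (of_bool (\<delta> (\<sigma> i)) * w (\<sigma> i) * of_bool (T (\<sigma> i) \<le> t)) /
        ((\<Sum>j=i..n. w (\<sigma> j)) + (\<Sum>j\<in>{1..<i}. w (\<sigma> j) * of_bool (\<xi> (\<sigma> j) \<and> \<nu> (\<sigma> j)))))"

definition Beran_w :: "nat \<Rightarrow> (nat \<Rightarrow> real) \<Rightarrow> (nat \<Rightarrow> real) \<Rightarrow> (nat \<Rightarrow> bool)
    \<Rightarrow> (nat \<Rightarrow> nat) \<Rightarrow> real \<Rightarrow> real" where
  "Beran_w n w T \<delta> \<sigma> t =
     (\<Prod>i=1..n. 1 - (of_bool (\<delta> (\<sigma> i)) * w (\<sigma> i) * of_bool (T (\<sigma> i) \<le> t)) /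
        (\<Sum>j=i..n. w (\<sigma> j)))"

definition Sc_hat where
  "Sc_hat K h n X T \<delta> \<xi> \<nu> \<sigma> x t = Sc_w n (NW_weight K h n X x) T \<delta> \<xi> \<nu> \<sigma> t"

definition Beran_hat where
  "Beran_hat K h n X T \<delta> \<sigma> x t = Beran_w n (NW_weight K h n X x) T \<delta> \<sigma> t"

end

theory Submission
  imports Defs
begin

lemma telescope:
  fixes w :: "nat \<Rightarrow> real" and P :: "nat \<Rightarrow> bool"
  assumes n1: "1 \<le> n"
    and nz: "\<forall>i\<in>{1..n}. (\<Sum>j=i..n. w j) \<noteq> 0"
    and down: "\<forall>i\<in>{1..n}. \<forall>j\<in>{1..n}. P i \<and> j \<le> i \<longrightarrow> P j"
  shows "m \<le> n \<Longrightarrow> (\<Prod>i=1..m. if P i then 1 - w i / (\<Sum>j=i..n. w j) else 1)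
     = (\<Sum>i=1..n. w i * of_bool (\<not> P i \<or> m < i)) / (\<Sum>j=1..n. w j)"
proof (induction m)
  case 0
  then show ?case using nz n1 by simp
next
  case (Suc m)
  have IH: "(\<Prod>i=1..m. if P i then 1 - w i / (\<Sum>j=i..n. w j) else 1)
     = (\<Sum>i=1..n. w i * of_bool (\<not> P i \<or> m < i)) / (\<Sum>j=1..n. w j)" using Suc by simp
  show ?case
  proof (cases "P (Suc m)")
    case True
    have allP: "\<forall>i\<in>{1..n}. i \<le> Suc m \<longrightarrow> P i" using down True Suc.prems by auto
    have e1: "(\<Sum>i=1..n. w i * of_bool (\<not> P i \<or> m < i)) = (\<Sum>i=Suc m..n. w i)"
    proof -
      have "(\<Sum>i=1..n. w i * of_bool (\<not> P i \<or> m < i)) = (\<Sum>i=1..n. if Suc m \<le> i then w i else 0)"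
        using allP by (intro sum.cong) auto
      also have "\<dots> = (\<Sum>i\<in>{1..n} \<inter> {i. Suc m \<le> i}. w i)" by (simp add: sum.inter_restrict)
      also have "{1..n} \<inter> {i. Suc m \<le> i} = {Suc m..n}" by auto
      finally show ?thesis .
    qed
    have e2: "(\<Sum>i=1..n. w i * of_bool (\<not> P i \<or> Suc m < i)) = (\<Sum>i=Suc (Suc m)..n. w i)"
    proof -
      have "(\<Sum>i=1..n. w i * of_bool (\<not> P i \<or> Suc m < i)) = (\<Sum>i=1..n. if Suc (Suc m) \<le> i then w i else 0)"
        using allP by (intro sum.cong) auto
      also have "\<dots> = (\<Sum>i\<in>{1..n} \<inter> {i. Suc (Suc m) \<le> i}. w i)" by (simp add: sum.inter_restrict)
      also have "{1..n} \<inter> {i. Suc (Suc m) \<le> i} = {Suc (Suc m)..n}" by auto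
      finally show ?thesis .
    qed
    have split: "(\<Sum>i=Suc m..n. w i) = w (Suc m) + (\<Sum>i=Suc (Suc m)..n. w i)"
      using Suc.prems by (simp add: sum.atLeast_Suc_atMost)
    have nzm: "(\<Sum>i=Suc m..n. w i) \<noteq> 0" using nz Suc.prems by auto
    have "(\<Prod>i=1..Suc m. if P i then 1 - w i / (\<Sum>j=i..n. w j) else 1)
        = (\<Sum>i=Suc m..n. w i) / (\<Sum>j=1..n. w j) * (1 - w (Suc m) / (\<Sum>j=Suc m..n. w j))"
      using IH e1 True by (simp add: prod.nat_ivl_Suc')
    also have "\<dots> = ((\<Sum>i=Suc m..n. w i) * (1 - w (Suc m) / (\<Sum>j=Suc m..n. w j))) / (\<Sum>j=1..n. w j)"
      by simp
    also have "(\<Sum>i=Suc m..n. w i) * (1 - w (Suc m) / (\<Sum>j=Suc m..n. w j)) = (\<Sum>i=Suc (Suc m)..n. w i)"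
      using nzm split by (simp add: right_diff_distrib)
    finally have "(\<Prod>i=1..Suc m. if P i then 1 - w i / (\<Sum>j=i..n. w j) else 1) = (\<Sum>i=Suc (Suc m)..n. w i) / (\<Sum>j=1..n. w j)" .
    then show ?thesis by (simp only: e2)
  next
    case False
    have "(\<Sum>i=1..n. w i * of_bool (\<not> P i \<or> m < i)) = (\<Sum>i=1..n. w i * of_bool (\<not> P i \<or> Suc m < i))"
    proof (intro sum.cong refl)
      fix i show "w i * of_bool (\<not> P i \<or> m < i) = w i * of_bool (\<not> P i \<or> Suc m < i)"
        using False by (cases "i = Suc m") auto
    qed
    then show ?thesis using IH False by (simp add: prod.nat_ivl_Suc')
  qed
qed


theorem proposition1:
  fixes n :: nat and X :: "nat \<Rightarrow> real" and Y :: "nat \<Rightarrow> ereal" and C T :: "nat \<Rightarrow> real"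
    and \<delta> \<xi> \<nu> :: "nat \<Rightarrow> bool" and \<sigma> :: "nat \<Rightarrow> nat"
    and K :: "real \<Rightarrow> real" and h x :: real
  assumes model: "\<forall>i\<in>{1..n}. cure_obs (Y i) (C i) (T i) (\<delta> i) (\<xi> i) (\<nu> i)"
    and distinct_times: "inj_on T {1..n}"
    and sort_perm: "bij_betw \<sigma> {1..n} {1..n}"
    and sorted: "strict_mono_on {1..n} (T \<circ> \<sigma>)"
    and h_pos: "h > 0"
    and nonzero_NW: "(\<Sum>j=1..n. Kh K h (x - X j)) \<noteq> 0"
    and nonzero_Beran: "\<forall>i\<in>{1..n}. (\<Sum>j=i..n. NW_weight K h n X x (\<sigma> j)) \<noteq> 0"
    and nonzero_Sc: "\<forall>i\<in>{1..n}. (\<Sum>j=i..n. NW_weight K h n X x (\<sigma> j))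
          + (\<Sum>j\<in>{1..<i}. NW_weight K h n X x (\<sigma> j) * of_bool (\<xi> (\<sigma> j) \<and> \<nu> (\<sigma> j))) \<noteq> 0"
  shows
    \<comment> \<open>1. no individual known to be cured\<close>
    "((\<forall>i\<in>{1..n}. \<not> (\<xi> i \<and> \<nu> i)) \<longrightarrow>
        (\<forall>t. Sc_hat K h n X T \<delta> \<xi> \<nu> \<sigma> x t = Beran_hat K h n X T \<delta> \<sigma> x t))
   \<and>
    \<comment> \<open>2. known cure threshold d\<close>
    (\<forall>d::real. (\<forall>i\<in>{1..n}. (\<xi> i \<and> \<nu> i) \<longleftrightarrow> T i \<ge> d) \<longrightarrow>
        (\<forall>t. Sc_hat K h n X T \<delta> \<xi> \<nu> \<sigma> x t = Beran_hat K h n X T \<delta> \<sigma> x t))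
   \<and>
    \<comment> \<open>3. no censoring: uncured observed, cured known and later than all uncured\<close>
    ((\<forall>i\<in>{1..n}. (\<delta> i \<and> \<not> (\<xi> i \<and> \<nu> i) \<and> Y i < \<infinity> \<and> ereal (T i) = Y i)
                 \<or> (Y i = \<infinity> \<and> (\<xi> i \<and> \<nu> i) \<and> \<not> \<delta> i))
      \<and> (\<forall>i\<in>{1..n}. \<forall>j\<in>{1..n}. \<delta> i \<and> Y j = \<infinity> \<longrightarrow> T i < T j)
     \<longrightarrow> (\<forall>t::real. (\<forall>j\<in>{1..n}. Y j = \<infinity> \<longrightarrow> t < T j) \<longrightarrow>
           Sc_hat K h n X T \<delta> \<xi> \<nu> \<sigma> x t
             = (\<Sum>i=1..n. NW_weight K h n X x (\<sigma> i) * of_bool (T (\<sigma> i) > t))))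
   \<and>
    \<comment> \<open>4. unconditional setting: all weights 1/n\<close>
    (\<forall>t. Sc_w n (\<lambda>_. 1 / real n) T \<delta> \<xi> \<nu> \<sigma> t
        = (\<Prod>i=1..n. 1 - of_bool (\<delta> (\<sigma> i)) * of_bool (T (\<sigma> i) \<le> t) /
             (real (n - i + 1) + (\<Sum>j\<in>{1..<i}. of_bool (\<xi> (\<sigma> j) \<and> \<nu> (\<sigma> j))))))
   \<and>
    (\<forall>d::real. (\<forall>i\<in>{1..n}. (\<xi> i \<and> \<nu> i) \<longleftrightarrow> T i \<ge> d) \<longrightarrow>
        (\<forall>t. Sc_w n (\<lambda>_. 1 / real n) T \<delta> \<xi> \<nu> \<sigma> t
            = (\<Prod>i=1..n. 1 - of_bool (\<delta> (\<sigma> i)) * of_bool (T (\<sigma> i) \<le> t) / real (n - i + 1))))"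
proof -
  let ?w = "NW_weight K h n X x"
  have noD: "\<forall>i\<in>{1..n}. \<xi> i \<and> \<nu> i \<longrightarrow> \<not> \<delta> i"
    using model unfolding cure_obs_def by blast
  have sin: "\<sigma> i \<in> {1..n}" if "i \<in> {1..n}" for i
    using bij_betw_apply[OF sort_perm] that by simp
  have mono: "T (\<sigma> j) < T (\<sigma> i)" if "i \<in> {1..n}" "j \<in> {1..n}" "j < i" for i j
    using strict_mono_onD[OF sorted, of j i] that by simp
  have n1: "1 \<le> n"
  proof (rule ccontr)
    assume "\<not> 1 \<le> n" then have "n = 0" by simp
    then show False using nonzero_NW by simp
  qed
  have key: "\<forall>i\<in>{1..n}. \<delta> (\<sigma> i) \<longrightarrow> (\<forall>j\<in>{1..<i}. \<not> (\<xi> (\<sigma> j) \<and> \<nu> (\<sigma> j)))"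
    if thr: "\<forall>i\<in>{1..n}. (\<xi> i \<and> \<nu> i) \<longleftrightarrow> T i \<ge> d" for d
  proof (intro ballI impI)
    fix i j assume i: "i \<in> {1..n}" and d: "\<delta> (\<sigma> i)" and j: "j \<in> {1..<i}"
    have "\<not> (\<xi> (\<sigma> i) \<and> \<nu> (\<sigma> i))" using noD sin[OF i] d by blast
    then have "T (\<sigma> i) < d" using thr sin[OF i] by force
    moreover have "T (\<sigma> j) < T (\<sigma> i)" using mono[OF i, of j] i j by auto
    ultimately have "T (\<sigma> j) < d" by simp
    moreover have "\<sigma> j \<in> {1..n}" using sin i j by auto
    ultimately show "\<not> (\<xi> (\<sigma> j) \<and> \<nu> (\<sigma> j))" using thr by force
  qed
  have thrgen: "Sc_w n w T \<delta> \<xi> \<nu> \<sigma> t = Beran_w n w T \<delta> \<sigma> t"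
    if k: "\<forall>i\<in>{1..n}. \<delta> (\<sigma> i) \<longrightarrow> (\<forall>j\<in>{1..<i}. \<not> (\<xi> (\<sigma> j) \<and> \<nu> (\<sigma> j)))" for w t
    unfolding Sc_w_def Beran_w_def
  proof (rule prod.cong[OF refl])
    fix i assume i: "i \<in> {1..n}"
    show "1 - (of_bool (\<delta> (\<sigma> i)) * w (\<sigma> i) * of_bool (T (\<sigma> i) \<le> t)) /
        ((\<Sum>j=i..n. w (\<sigma> j)) + (\<Sum>j\<in>{1..<i}. w (\<sigma> j) * of_bool (\<xi> (\<sigma> j) \<and> \<nu> (\<sigma> j))))
      = 1 - (of_bool (\<delta> (\<sigma> i)) * w (\<sigma> i) * of_bool (T (\<sigma> i) \<le> t)) / (\<Sum>j=i..n. w (\<sigma> j))"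
    proof (cases "\<delta> (\<sigma> i)")
      case True
      then have "(\<Sum>j\<in>{1..<i}. w (\<sigma> j) * of_bool (\<xi> (\<sigma> j) \<and> \<nu> (\<sigma> j))) = 0"
        using k i by (intro sum.neutral) auto
      then show ?thesis by simp
    qed simp
  qed
  have P1: "(\<forall>i\<in>{1..n}. \<not> (\<xi> i \<and> \<nu> i)) \<longrightarrow>
        (\<forall>t. Sc_hat K h n X T \<delta> \<xi> \<nu> \<sigma> x t = Beran_hat K h n X T \<delta> \<sigma> x t)"
  proof (intro impI allI)
    fix t assume a: "\<forall>i\<in>{1..n}. \<not> (\<xi> i \<and> \<nu> i)"
    have "\<forall>i\<in>{1..n}. \<delta> (\<sigma> i) \<longrightarrow> (\<forall>j\<in>{1..<i}. \<not> (\<xi> (\<sigma> j) \<and> \<nu> (\<sigma> j)))"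
      using a sin by auto
    then show "Sc_hat K h n X T \<delta> \<xi> \<nu> \<sigma> x t = Beran_hat K h n X T \<delta> \<sigma> x t"
      unfolding Sc_hat_def Beran_hat_def by (rule thrgen)
  qed
  have P2: "\<forall>d::real. (\<forall>i\<in>{1..n}. (\<xi> i \<and> \<nu> i) \<longleftrightarrow> T i \<ge> d) \<longrightarrow>
        (\<forall>t. Sc_hat K h n X T \<delta> \<xi> \<nu> \<sigma> x t = Beran_hat K h n X T \<delta> \<sigma> x t)"
    unfolding Sc_hat_def Beran_hat_def using thrgen key by blast
  have P3: "((\<forall>i\<in>{1..n}. (\<delta> i \<and> \<not> (\<xi> i \<and> \<nu> i) \<and> Y i < \<infinity> \<and> ereal (T i) = Y i)
                 \<or> (Y i = \<infinity> \<and> (\<xi> i \<and> \<nu> i) \<and> \<not> \<delta> i))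
      \<and> (\<forall>i\<in>{1..n}. \<forall>j\<in>{1..n}. \<delta> i \<and> Y j = \<infinity> \<longrightarrow> T i < T j)
     \<longrightarrow> (\<forall>t::real. (\<forall>j\<in>{1..n}. Y j = \<infinity> \<longrightarrow> t < T j) \<longrightarrow>
           Sc_hat K h n X T \<delta> \<xi> \<nu> \<sigma> x t
             = (\<Sum>i=1..n. NW_weight K h n X x (\<sigma> i) * of_bool (T (\<sigma> i) > t))))"
  proof (intro impI allI)
    fix t
    assume A: "(\<forall>i\<in>{1..n}. (\<delta> i \<and> \<not> (\<xi> i \<and> \<nu> i) \<and> Y i < \<infinity> \<and> ereal (T i) = Y i)
                 \<or> (Y i = \<infinity> \<and> (\<xi> i \<and> \<nu> i) \<and> \<not> \<delta> i))
      \<and> (\<forall>i\<in>{1..n}. \<forall>j\<in>{1..n}. \<delta> i \<and> Y j = \<infinity> \<longrightarrow> T i < T j)"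
      and tb: "\<forall>j\<in>{1..n}. Y j = \<infinity> \<longrightarrow> t < T j"
    define P where "P i = (T (\<sigma> i) \<le> t)" for i
    have Pd: "\<delta> (\<sigma> i) \<and> \<not> (\<xi> (\<sigma> i) \<and> \<nu> (\<sigma> i))" if "i \<in> {1..n}" "P i" for i
      using A tb sin[OF that(1)] that(2) unfolding P_def by force
    have down: "\<forall>i\<in>{1..n}. \<forall>j\<in>{1..n}. P i \<and> j \<le> i \<longrightarrow> P j"
    proof (intro ballI impI)
      fix i j assume i: "i \<in> {1..n}" and j: "j \<in> {1..n}" and pj: "P i \<and> j \<le> i"
      show "P j"
      proof (cases "j = i")
        case False
        then have "T (\<sigma> j) < T (\<sigma> i)" using mono[OF i j] pj by auto
        then show ?thesis using pj unfolding P_def by simp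
      qed (use pj in simp)
    qed
    have fac: "(\<Prod>i=1..n. 1 - (of_bool (\<delta> (\<sigma> i)) * ?w (\<sigma> i) * of_bool (T (\<sigma> i) \<le> t)) /
        ((\<Sum>j=i..n. ?w (\<sigma> j)) + (\<Sum>j\<in>{1..<i}. ?w (\<sigma> j) * of_bool (\<xi> (\<sigma> j) \<and> \<nu> (\<sigma> j)))))
      = (\<Prod>i=1..n. if P i then 1 - ?w (\<sigma> i) / (\<Sum>j=i..n. ?w (\<sigma> j)) else 1)"
    proof (rule prod.cong[OF refl])
      fix i assume i: "i \<in> {1..n}"
      show "1 - (of_bool (\<delta> (\<sigma> i)) * ?w (\<sigma> i) * of_bool (T (\<sigma> i) \<le> t)) /
        ((\<Sum>j=i..n. ?w (\<sigma> j)) + (\<Sum>j\<in>{1..<i}. ?w (\<sigma> j) * of_bool (\<xi> (\<sigma> j) \<and> \<nu> (\<sigma> j))))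
        = (if P i then 1 - ?w (\<sigma> i) / (\<Sum>j=i..n. ?w (\<sigma> j)) else 1)"
      proof (cases "P i")
        case True
        have "(\<Sum>j\<in>{1..<i}. ?w (\<sigma> j) * of_bool (\<xi> (\<sigma> j) \<and> \<nu> (\<sigma> j))) = 0"
        proof (intro sum.neutral ballI)
          fix j assume j: "j \<in> {1..<i}"
          then have "P j" using down[rule_format, of i j] i True by auto
          then show "?w (\<sigma> j) * of_bool (\<xi> (\<sigma> j) \<and> \<nu> (\<sigma> j)) = 0" using Pd j i by auto
        qed
        then show ?thesis using True Pd[OF i True] unfolding P_def by simp
      qed (simp add: P_def)
    qed
    have tel: "(\<Prod>i=1..n. if P i then 1 - ?w (\<sigma> i) / (\<Sum>j=i..n. ?w (\<sigma> j)) else 1)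
      = (\<Sum>i=1..n. ?w (\<sigma> i) * of_bool (\<not> P i \<or> n < i)) / (\<Sum>j=1..n. ?w (\<sigma> j))"
      by (rule telescope[of n "\<lambda>i. ?w (\<sigma> i)" P n, OF n1 nonzero_Beran down order_refl])
    have s1: "(\<Sum>j=1..n. ?w (\<sigma> j)) = 1"
    proof -
      have "(\<Sum>j=1..n. ?w (\<sigma> j)) = (\<Sum>j=1..n. ?w j)"
        using sum.reindex_bij_betw[OF sort_perm, of ?w] by simp
      also have "\<dots> = 1" unfolding NW_weight_def
        using nonzero_NW by (simp add: sum_divide_distrib[symmetric])
      finally show ?thesis .
    qed
    have s2: "(\<Sum>i=1..n. ?w (\<sigma> i) * of_bool (\<not> P i \<or> n < i))
       = (\<Sum>i=1..n. ?w (\<sigma> i) * of_bool (T (\<sigma> i) > t))"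
      by (intro sum.cong) (auto simp: P_def not_le)
    show "Sc_hat K h n X T \<delta> \<xi> \<nu> \<sigma> x t
             = (\<Sum>i=1..n. NW_weight K h n X x (\<sigma> i) * of_bool (T (\<sigma> i) > t))"
      unfolding Sc_hat_def Sc_w_def using fac tel s1 s2 by simp
  qed
  have P4: "\<forall>t. Sc_w n (\<lambda>_. 1 / real n) T \<delta> \<xi> \<nu> \<sigma> t
        = (\<Prod>i=1..n. 1 - of_bool (\<delta> (\<sigma> i)) * of_bool (T (\<sigma> i) \<le> t) /
             (real (n - i + 1) + (\<Sum>j\<in>{1..<i}. of_bool (\<xi> (\<sigma> j) \<and> \<nu> (\<sigma> j)))))"
  proof
    fix t show "Sc_w n (\<lambda>_. 1 / real n) T \<delta> \<xi> \<nu> \<sigma> t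
        = (\<Prod>i=1..n. 1 - of_bool (\<delta> (\<sigma> i)) * of_bool (T (\<sigma> i) \<le> t) /
             (real (n - i + 1) + (\<Sum>j\<in>{1..<i}. of_bool (\<xi> (\<sigma> j) \<and> \<nu> (\<sigma> j)))))"
      unfolding Sc_w_def
    proof (rule prod.cong[OF refl])
      fix i assume i: "i \<in> {1..n}"
      have c: "(\<Sum>j=i..n. 1 / real n) = real (n - i + 1) / real n"
        using i by simp
      have d: "(\<Sum>j\<in>{1..<i}. 1 / real n * of_bool (\<xi> (\<sigma> j) \<and> \<nu> (\<sigma> j)))
          = (\<Sum>j\<in>{1..<i}. of_bool (\<xi> (\<sigma> j) \<and> \<nu> (\<sigma> j))) / real n"
        by (subst sum_divide_distrib) (rule sum.cong, auto)
      have np: "real n > 0" using n1 by simp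
      show "1 - of_bool (\<delta> (\<sigma> i)) * (1 / real n) * of_bool (T (\<sigma> i) \<le> t) /
          ((\<Sum>j=i..n. 1 / real n) + (\<Sum>j\<in>{1..<i}. 1 / real n * of_bool (\<xi> (\<sigma> j) \<and> \<nu> (\<sigma> j))))
        = 1 - of_bool (\<delta> (\<sigma> i)) * of_bool (T (\<sigma> i) \<le> t) /
             (real (n - i + 1) + (\<Sum>j\<in>{1..<i}. of_bool (\<xi> (\<sigma> j) \<and> \<nu> (\<sigma> j))))"
        unfolding c d using np by (simp add: add_divide_distrib[symmetric])
    qed
  qed
  have P5: "\<forall>d::real. (\<forall>i\<in>{1..n}. (\<xi> i \<and> \<nu> i) \<longleftrightarrow> T i \<ge> d) \<longrightarrow>
        (\<forall>t. Sc_w n (\<lambda>_. 1 / real n) T \<delta> \<xi> \<nu> \<sigma> t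
            = (\<Prod>i=1..n. 1 - of_bool (\<delta> (\<sigma> i)) * of_bool (T (\<sigma> i) \<le> t) / real (n - i + 1)))"
  proof (intro allI impI)
    fix d t assume thr: "\<forall>i\<in>{1..n}. (\<xi> i \<and> \<nu> i) \<longleftrightarrow> T i \<ge> d"
    note k = key[OF thr]
    show "Sc_w n (\<lambda>_. 1 / real n) T \<delta> \<xi> \<nu> \<sigma> t
            = (\<Prod>i=1..n. 1 - of_bool (\<delta> (\<sigma> i)) * of_bool (T (\<sigma> i) \<le> t) / real (n - i + 1))"
      unfolding P4[rule_format]
    proof (rule prod.cong[OF refl])
      fix i assume i: "i \<in> {1..n}"
      show "1 - of_bool (\<delta> (\<sigma> i)) * of_bool (T (\<sigma> i) \<le> t) /
             (real (n - i + 1) + (\<Sum>j\<in>{1..<i}. of_bool (\<xi> (\<sigma> j) \<and> \<nu> (\<sigma> j))))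
          = 1 - of_bool (\<delta> (\<sigma> i)) * of_bool (T (\<sigma> i) \<le> t) / real (n - i + 1)"
      proof (cases "\<delta> (\<sigma> i)")
        case True
        then have "(\<Sum>j\<in>{1..<i}. (of_bool (\<xi> (\<sigma> j) \<and> \<nu> (\<sigma> j)) :: real)) = 0"
          using k i by (intro sum.neutral) auto
        then show ?thesis by simp
      qed simp
    qed
  qed
  show ?thesis using P1 P2 P3 P4 P5 by blast
qed

end
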